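(* Let $n\ge1$, $r\ge1$, $R\subseteq\{1,\dots,n-1\}$ and $\sigma\in S_n$. Then $$(q_r;q_r)_n\sum_{\substack{Z\in(\mathbb{N}^r)^n\\ \sigma_R(Z)=\sigma}} q^Z=\sum_{S\in(\mathbb{N}^{r-1})^n} q_r^{\mathrm{Comaj}_{R,S}(\sigma)}q^S=\sum_{S\in(\mathbb{N}^{r-1})^n} q^{Z_{R,\sigma}(S)}.$$
   Context: $\mathbb{N}=\{0,1,\dots\}$; sequences in $\mathbb{N}^r$ are compared lexicographically. $(q;t)_r=(1-q)(1-qt)\cdots(1-qt^{r-1})$. For $R\subseteq\{1,\dots,n-1\}$ and distinct $a,b\in\{1,\dots,n\}$, write $a\sim_R b$ if all of $\min(a,b),\dots,\max(a,b)-1$ lie in $R$. For $S=(s^1,\dots,s^n)\in(\mathbb{N}^{r'})^n$, index $i$ is read before $j$ if $s^i<s^j$, or $s^i=s^j$ and either ($i<j$ and not $i\sim_R j$) or ($i>j$ and $i\sim_R j$); $\sigma_R(S)\in S_n$ lists the indices in this reading order. For $Z\in(\mathbb{N}^{r'})^n$, $q^Z=\prod_{i=1}^{r'} q_{r'-i+1}^{z^1_i+\cdots+z^n_i}$. For $S\in(\mathbb{N}^{r'})^n$ (if $r'=0$, all $s^i$ are empty and equal) and $\sigma\in S_n$, $\mathrm{Des}_{R,S}(\sigma)$ is the set of $i\in\{1,\dots,n-1\}$ with either $s^{\sigma_i}>s^{\sigma_{i+1}}$, or $s^{\sigma_i}=s^{\sigma_{i+1}}$ and either ($\sigma_{i+1}<\sigma_i$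 and not $\sigma_{i+1}\sim_R\sigma_i$) or ($\sigma_{i+1}>\sigma_i$ and $\sigma_i\sim_R\sigma_{i+1}$); $\mathrm{Comaj}_{R,S}(\sigma)=\sum_{i\in\mathrm{Des}_{R,S}(\sigma)}(n-i)$. $Z_{R,\sigma}(S)\in(\mathbb{N}^{r'+1})^n$ prepends to each $s^j$ a first coordinate $z^j_1$, where $z^{\sigma_i}_1=\#\{j<i:j\in\mathrm{Des}_{R,S}(\sigma)\}$. *)

theory Defs
  imports "HOL-Analysis.Analysis" "HOL-Combinatorics.Permutations"
begin

text \<open>Indices run over {1..n}. An element S of (N^r')^n is a function
  S :: nat => nat list with S j a list of length r' for j in {1..n}
  (coordinate i of s^j is S j ! (i-1)) and S j = [] outside {1..n}.\<close>

definition tuples :: "nat \<Rightarrow> nat \<Rightarrow> (nat \<Rightarrow> nat list) set" where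
  "tuples n r' = {S. (\<forall>j\<in>{1..n}. length (S j) = r') \<and> (\<forall>j. j \<notin> {1..n} \<longrightarrow> S j = [])}"

definition lexless :: "nat list \<Rightarrow> nat list \<Rightarrow> bool" where
  "lexless xs ys \<longleftrightarrow> (\<exists>k < min (length xs) (length ys).
      take k xs = take k ys \<and> xs ! k < ys ! k)"

definition simR :: "nat set \<Rightarrow> nat \<Rightarrow> nat \<Rightarrow> bool" where
  "simR R a b \<longleftrightarrow> a \<noteq> b \<and> (\<forall>k. min a b \<le> k \<and> k < max a b \<longrightarrow> k \<in> R)"

definition read_before :: "nat set \<Rightarrow> (nat \<Rightarrow> nat list) \<Rightarrow> nat \<Rightarrow> nat \<Rightarrow> bool" where
  "read_before R S i j \<longleftrightarrow> lexless (S i) (S j) \<or>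
     (S i = S j \<and> ((i < j \<and> \<not> simR R i j) \<or> (i > j \<and> simR R i j)))"

text \<open>sigma_R(S) as a function i |-> sigma_i: the i-th index in reading order
  is the one preceded by exactly i-1 indices; identity outside {1..n}.\<close>
definition sigmaR :: "nat \<Rightarrow> nat set \<Rightarrow> (nat \<Rightarrow> nat list) \<Rightarrow> nat \<Rightarrow> nat" where
  "sigmaR n R S = (\<lambda>i. if i \<in> {1..n}
      then (THE j. j \<in> {1..n} \<and> card {k \<in> {1..n}. read_before R S k j} = i - 1)
      else i)"

definition qmon :: "nat \<Rightarrow> nat \<Rightarrow> (nat \<Rightarrow> real) \<Rightarrow> (nat \<Rightarrow> nat list) \<Rightarrow> real" where
  "qmon n r' q Z = (\<Prod>i\<in>{1..r'}. q (r' - i + 1) ^ (\<Sum>j\<in>{1..n}. Z j ! (i - 1)))"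

definition qpoch :: "real \<Rightarrow> real \<Rightarrow> nat \<Rightarrow> real" where
  "qpoch a t m = (\<Prod>k<m. 1 - a * t ^ k)"

definition DesRS :: "nat \<Rightarrow> nat set \<Rightarrow> (nat \<Rightarrow> nat list) \<Rightarrow> (nat \<Rightarrow> nat) \<Rightarrow> nat set" where
  "DesRS n R S \<sigma> = {i \<in> {1..n-1}.
      lexless (S (\<sigma> (i+1))) (S (\<sigma> i)) \<or>
      (S (\<sigma> i) = S (\<sigma> (i+1)) \<and>
        ((\<sigma> (i+1) < \<sigma> i \<and> \<not> simR R (\<sigma> (i+1)) (\<sigma> i)) \<or>
         (\<sigma> (i+1) > \<sigma> i \<and> simR R (\<sigma> i) (\<sigma> (i+1)))))}"

definition ComajRS :: "nat \<Rightarrow> nat set \<Rightarrow> (nat \<Rightarrow> nat list) \<Rightarrow> (nat \<Rightarrow> nat) \<Rightarrow> nat" where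
  "ComajRS n R S \<sigma> = (\<Sum>i\<in>DesRS n R S \<sigma>. n - i)"

definition ZRsigma :: "nat \<Rightarrow> nat set \<Rightarrow> (nat \<Rightarrow> nat) \<Rightarrow> (nat \<Rightarrow> nat list) \<Rightarrow> nat \<Rightarrow> nat list" where
  "ZRsigma n R \<sigma> S = (\<lambda>j. if j \<in> {1..n}
      then card {k \<in> DesRS n R S \<sigma>. k < (THE i. i \<in> {1..n} \<and> \<sigma> i = j)} # S j
      else [])"

end

theory Submission
  imports Defs
begin


lemma lexless_Nil1[simp]: "\<not> lexless [] ys" by (simp add: lexless_def)
lemma lexless_Nil2[simp]: "\<not> lexless xs []" by (simp add: lexless_def)
lemma lexless_Cons[simp]:
  "lexless (x#xs) (y#ys) \<longleftrightarrow> x < y \<or> (x = y \<and> lexless xs ys)"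
proof
  assume "lexless (x#xs) (y#ys)"
  then obtain k where k: "k < min (length (x#xs)) (length (y#ys))"
    "take k (x#xs) = take k (y#ys)" "(x#xs) ! k < (y#ys) ! k" by (auto simp: lexless_def)
  show "x < y \<or> (x = y \<and> lexless xs ys)"
  proof (cases k)
    case 0 then show ?thesis using k by simp
  next
    case (Suc k') then show ?thesis using k unfolding lexless_def by auto
  qed
next
  assume "x < y \<or> (x = y \<and> lexless xs ys)"
  then show "lexless (x#xs) (y#ys)"
  proof
    assume "x < y" then show ?thesis unfolding lexless_def by (intro exI[of _ 0]) auto
  next
    assume "x = y \<and> lexless xs ys"
    then obtain k where k: "k < min (length xs) (length ys)"
      "take k xs = take k ys" "xs ! k < ys ! k" "x = y" by (auto simp: lexless_def)
    then show ?thesis unfolding lexless_def by (intro exI[of _ "Suc k"]) auto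
  qed
qed

lemma lexless_irrefl: "\<not> lexless xs xs"
  by (induction xs) auto

lemma lexless_trans: "lexless xs ys \<Longrightarrow> lexless ys zs \<Longrightarrow> lexless xs zs"
proof (induction xs arbitrary: ys zs)
  case Nil then show ?case by simp
next
  case (Cons x xs)
  then obtain y ys' where ys: "ys = y # ys'" by (cases ys) auto
  with Cons obtain z zs' where zs: "zs = z # zs'" by (cases zs) auto
  show ?case using Cons ys zs by auto
qed

lemma lexless_total: "length xs = length ys \<Longrightarrow> xs \<noteq> ys \<Longrightarrow> lexless xs ys \<or> lexless ys xs"
proof (induction xs arbitrary: ys)
  case Nil then show ?case by simp
next
  case (Cons x xs)
  then obtain y ys' where ys: "ys = y # ys'" by (cases ys) auto
  show ?case using Cons ys by (cases "x = y") auto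
qed

lemma simR_sym: "simR R a b = simR R b a"
  unfolding simR_def by (auto simp: min.commute max.commute)

lemma simR_split: "a < b \<Longrightarrow> b < c \<Longrightarrow> simR R a c \<longleftrightarrow> simR R a b \<and> simR R b c"
  unfolding simR_def by (auto simp: min_def max_def) (meson less_trans not_less)+

definition tb :: "nat set \<Rightarrow> nat \<Rightarrow> nat \<Rightarrow> bool" where
  "tb R i j \<longleftrightarrow> (i < j \<and> \<not> simR R i j) \<or> (i > j \<and> simR R i j)"

lemma tb_trans: "tb R a b \<Longrightarrow> tb R b c \<Longrightarrow> tb R a c"
proof -
  assume ab: "tb R a b" and bc: "tb R b c"
  have s1: "simR R x z \<longleftrightarrow> simR R x y \<and> simR R y z" if "x < y" "y < z" for x y z
    using simR_split[OF that] .
  show ?thesis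
  proof (cases a b rule: linorder_cases)
    case less
    then have nab: "\<not> simR R a b" using ab by (auto simp: tb_def)
    show ?thesis
    proof (cases b c rule: linorder_cases)
      case less
      then show ?thesis using nab s1[of a b c] \<open>a < b\<close> by (auto simp: tb_def)
    next
      case equal then show ?thesis using bc by (simp add: tb_def)
    next
      case greater
      then have sbc: "simR R c b" using bc by (auto simp: tb_def simR_sym)
      show ?thesis
      proof (cases a c rule: linorder_cases)
        case less then show ?thesis using s1[of a c b] sbc nab greater by (auto simp: tb_def)
      next
        case equal then show ?thesis using nab sbc by (simp add: simR_sym)
      next
        case greater then show ?thesis using s1[of c a b] sbc nab \<open>a < b\<close> by (auto simp: tb_def)
      qed
    qed
  next
    case equal then show ?thesis using ab by (simp add: tb_def)
  next
    case greater
    then have sab: "simR R b a" using ab by (auto simp: tb_def simR_sym)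
    show ?thesis
    proof (cases b c rule: linorder_cases)
      case less
      then have nbc: "\<not> simR R b c" using bc by (auto simp: tb_def)
      show ?thesis
      proof (cases a c rule: linorder_cases)
        case less then show ?thesis using s1[of b a c] sab nbc greater by (auto simp: tb_def)
      next
        case equal then show ?thesis using nbc sab by simp
      next
        case greater then show ?thesis using s1[of b c a] sab nbc \<open>b < c\<close> by (auto simp: tb_def)
      qed
    next
      case equal then show ?thesis using bc by (simp add: tb_def)
    next
      case greater
      then have "simR R c b" using bc by (auto simp: tb_def simR_sym)
      then show ?thesis using s1[of c b a] sab greater \<open>a > b\<close> by (auto simp: tb_def simR_sym)
    qed
  qed
qed

lemma tb_irrefl: "\<not> tb R a a" by (simp add: tb_def)

lemma tb_total: "a \<noteq> b \<Longrightarrow> tb R a b \<or> tb R b a"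
  unfolding tb_def by (auto simp: simR_sym)

lemma read_before_tb: "read_before R S i j \<longleftrightarrow> lexless (S i) (S j) \<or> (S i = S j \<and> tb R i j)"
  unfolding read_before_def tb_def by simp

lemma rb_irrefl: "\<not> read_before R S a a"
  by (simp add: read_before_tb lexless_irrefl tb_irrefl)

lemma rb_trans: "read_before R S a b \<Longrightarrow> read_before R S b c \<Longrightarrow> read_before R S a c"
  unfolding read_before_tb using lexless_trans tb_trans by metis

lemma rb_total: "a \<noteq> b \<Longrightarrow> length (S a) = length (S b) \<Longrightarrow>
   read_before R S a b \<or> read_before R S b a"
  unfolding read_before_tb using lexless_total tb_total by metis



lemma rank_mono:
  assumes irr: "\<And>a. \<not> rb a a" and trans: "\<And>a b c. rb a b \<Longrightarrow> rb b c \<Longrightarrow> rb a c"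
    and ab: "rb a b" and a: "a \<in> {1..n::nat}" and b: "b \<in> {1..n::nat}"
  shows "card {k\<in>{1..n}. rb k a} < card {k\<in>{1..n}. rb k b}"
proof (rule psubset_card_mono)
  show "finite {k\<in>{1..n}. rb k b}" by simp
  have "{k\<in>{1..n}. rb k a} \<subseteq> {k\<in>{1..n}. rb k b}" using trans[of _ a b] ab by blast
  moreover have "a \<in> {k\<in>{1..n}. rb k b} - {k\<in>{1..n}. rb k a}" using ab irr[of a] a trans[of a b a] by blast
  ultimately show "{k\<in>{1..n}. rb k a} \<subset> {k\<in>{1..n}. rb k b}" by blast
qed

lemma rank_perm:
  fixes rb :: "nat \<Rightarrow> nat \<Rightarrow> bool"
  assumes irr: "\<And>a. \<not> rb a a" and trans: "\<And>a b c. rb a b \<Longrightarrow> rb b c \<Longrightarrow> rb a c"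
    and tot: "\<And>a b. a \<in> {1..n} \<Longrightarrow> b \<in> {1..n} \<Longrightarrow> a \<noteq> b \<Longrightarrow> rb a b \<or> rb b a"
    and perm: "\<sigma> permutes {1..n}"
  shows "(\<forall>i\<in>{1..n}. (THE j. j\<in>{1..n} \<and> card {k\<in>{1..n}. rb k j} = i - 1) = \<sigma> i)
     \<longleftrightarrow> (\<forall>i. 1 \<le> i \<and> i < n \<longrightarrow> rb (\<sigma> i) (\<sigma> (Suc i)))"
proof -
  define rk where "rk j = card {k\<in>{1..n}. rb k j}" for j
  have mono: "rk a < rk b" if "rb a b" "a \<in> {1..n}" "b \<in> {1..n}" for a b
    unfolding rk_def by (rule rank_mono[of rb a b n]) (use irr trans that in auto)
  have sig_in: "\<sigma> i \<in> {1..n}" if "i \<in> {1..n}" for i using permutes_in_image[OF perm] that by blast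
  have sig_inj: "\<sigma> i = \<sigma> j \<longleftrightarrow> i = j" for i j using perm by (metis permutes_inj injD)
  have sig_surj: "\<exists>m\<in>{1..n}. j = \<sigma> m" if "j \<in> {1..n}" for j
    using perm that by (metis permutes_image image_iff)
  show ?thesis
  proof
    assume H: "\<forall>i\<in>{1..n}. (THE j. j\<in>{1..n} \<and> card {k\<in>{1..n}. rb k j} = i - 1) = \<sigma> i"
    have inj: "inj_on rk {1..n}"
    proof (rule inj_onI)
      fix a b assume "a \<in> {1..n}" "b \<in> {1..n}" "rk a = rk b"
      then show "a = b" using tot[of a b] mono[of a b] mono[of b a] by fastforce
    qed
    have sub: "rk ` {1..n} \<subseteq> {0..<n}"
    proof
      fix x assume "x \<in> rk ` {1..n}"
      then obtain j where j: "j \<in> {1..n}" "x = rk j" by auto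
      have "{k\<in>{1..n}. rb k j} \<subseteq> {1..n} - {j}" using irr by auto
      then have "rk j \<le> card ({1..n} - {j})" unfolding rk_def by (intro card_mono) auto
      also have "\<dots> = n - 1" using j by simp
      finally show "x \<in> {0..<n}" using j by auto
    qed
    have img: "rk ` {1..n} = {0..<n}"
      using card_subset_eq[of "{0..<n}" "rk ` {1..n}"] sub card_image[OF inj] by simp
    have rki: "rk (\<sigma> i) = i - 1" if i: "i \<in> {1..n}" for i
    proof -
      have "i - 1 \<in> rk ` {1..n}" using img i by auto
      then obtain j0 where j0a: "i - 1 = rk j0" "j0 \<in> {1..n}" by (rule imageE)
      then have j0: "j0 \<in> {1..n}" "rk j0 = i - 1" by simp_all
      have ex: "\<exists>!j. j\<in>{1..n} \<and> rk j = i - 1"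
      proof (rule ex1I[of _ j0])
        show "j0 \<in> {1..n} \<and> rk j0 = i - 1" using j0 by simp
      next
        fix j assume "j \<in> {1..n} \<and> rk j = i - 1"
        then show "j = j0" using j0 inj_onD[OF inj, of j j0] by simp
      qed
      have th: "(THE j. j\<in>{1..n} \<and> rk j = i - 1) \<in> {1..n} \<and> rk (THE j. j\<in>{1..n} \<and> rk j = i - 1) = i - 1"
        by (rule theI'[OF ex])
      have "(THE j. j\<in>{1..n} \<and> rk j = i - 1) = \<sigma> i"
        using H i unfolding rk_def by blast
      then show ?thesis using th by simp
    qed
    show "\<forall>i. 1 \<le> i \<and> i < n \<longrightarrow> rb (\<sigma> i) (\<sigma> (Suc i))"
    proof (intro allI impI)
      fix i assume i: "1 \<le> i \<and> i < n"
      have a: "rk (\<sigma> i) < rk (\<sigma> (Suc i))" using rki[of i] rki[of "Suc i"] i by auto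
      have "\<sigma> i \<noteq> \<sigma> (Suc i)" using sig_inj by auto
      then have "rb (\<sigma> i) (\<sigma> (Suc i)) \<or> rb (\<sigma> (Suc i)) (\<sigma> i)" using tot[of "\<sigma> i" "\<sigma> (Suc i)"] sig_in[of i] sig_in[of "Suc i"] i by auto
      then show "rb (\<sigma> i) (\<sigma> (Suc i))" using mono[of "\<sigma> (Suc i)" "\<sigma> i"] a sig_in[of i] sig_in[of "Suc i"] i by auto
    qed
  next
    assume C: "\<forall>i. 1 \<le> i \<and> i < n \<longrightarrow> rb (\<sigma> i) (\<sigma> (Suc i))"
    have lt: "rb (\<sigma> a) (\<sigma> b)" if "1 \<le> a" "a < b" "b \<le> n" for a b
      using that
    proof (induction b rule: less_induct)
      case (less b)
      show ?case
      proof (cases "Suc a = b")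
        case True then show ?thesis using C less.prems by auto
      next
        case False
        then obtain b' where b': "b = Suc b'" "a < b'" using less.prems by (cases b) auto
        then have "rb (\<sigma> a) (\<sigma> b')" using less by auto
        moreover have "rb (\<sigma> b') (\<sigma> b)" using C b' less.prems by auto
        ultimately show ?thesis using trans[of "\<sigma> a" "\<sigma> b'" "\<sigma> b"] by blast
      qed
    qed
    have set: "{k\<in>{1..n}. rb k (\<sigma> i)} = \<sigma> ` {1..<i}" if i: "i \<in> {1..n}" for i
    proof
      show "{k\<in>{1..n}. rb k (\<sigma> i)} \<subseteq> \<sigma> ` {1..<i}"
      proof
        fix k assume k: "k \<in> {k\<in>{1..n}. rb k (\<sigma> i)}"
        then obtain m where m: "m \<in> {1..n}" "k = \<sigma> m" using sig_surj by blast
        have "m < i"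
        proof (rule ccontr)
          assume "\<not> m < i"
          then have "m = i \<or> i < m" by auto
          then show False
          proof
            assume "m = i" then show False using k m irr by auto
          next
            assume "i < m" then have "rb (\<sigma> i) (\<sigma> m)" using lt i m by auto
            then show False using k m irr trans[of "\<sigma> i" "\<sigma> m" "\<sigma> i"] by auto
          qed
        qed
        then show "k \<in> \<sigma> ` {1..<i}" using m by auto
      qed
    next
      show "\<sigma> ` {1..<i} \<subseteq> {k\<in>{1..n}. rb k (\<sigma> i)}"
        using lt i sig_in by auto
    qed
    have rki: "rk (\<sigma> i) = i - 1" if i: "i \<in> {1..n}" for i
    proof -
      have "rk (\<sigma> i) = card (\<sigma> ` {1..<i})" unfolding rk_def using set[OF i] by simp
      also have "\<dots> = card {1..<i}" by (rule card_image) (use sig_inj in \<open>auto simp: inj_on_def\<close>)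
      finally show ?thesis by simp
    qed
    show "\<forall>i\<in>{1..n}. (THE j. j\<in>{1..n} \<and> card {k\<in>{1..n}. rb k j} = i - 1) = \<sigma> i"
    proof
      fix i assume i: "i \<in> {1..n}"
      show "(THE j. j\<in>{1..n} \<and> card {k\<in>{1..n}. rb k j} = i - 1) = \<sigma> i"
      proof (rule the_equality)
        show "\<sigma> i \<in> {1..n} \<and> card {k\<in>{1..n}. rb k (\<sigma> i)} = i - 1"
          using sig_in[OF i] rki[OF i] unfolding rk_def by simp
      next
        fix j assume j: "j \<in> {1..n} \<and> card {k\<in>{1..n}. rb k j} = i - 1"
        then obtain m where m: "m \<in> {1..n}" "j = \<sigma> m" using sig_surj by blast
        then have "m - 1 = i - 1" using rki[OF m(1)] j unfolding rk_def by simp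
        then have "m = i" using m i by auto
        then show "j = \<sigma> i" using m by simp
      qed
    qed
  qed
qed



lemma tuples_len: "S \<in> tuples n r' \<Longrightarrow> j \<in> {1..n} \<Longrightarrow> length (S j) = r'"
  by (simp add: tuples_def)
lemma tuples_out: "S \<in> tuples n r' \<Longrightarrow> j \<notin> {1..n} \<Longrightarrow> S j = []"
  by (simp add: tuples_def)

lemma sigmaR_eq_iff:
  assumes S: "S \<in> tuples n r'" and perm: "\<sigma> permutes {1..n}"
  shows "sigmaR n R S = \<sigma> \<longleftrightarrow> (\<forall>i. 1 \<le> i \<and> i < n \<longrightarrow> read_before R S (\<sigma> i) (\<sigma> (Suc i)))"
proof -
  have "sigmaR n R S = \<sigma> \<longleftrightarrow> (\<forall>i\<in>{1..n}. sigmaR n R S i = \<sigma> i)"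
  proof
    assume "\<forall>i\<in>{1..n}. sigmaR n R S i = \<sigma> i"
    moreover have "sigmaR n R S i = \<sigma> i" if "i \<notin> {1..n}" for i
      using that permutes_not_in[OF perm that] unfolding sigmaR_def by (simp only: if_False)
    ultimately show "sigmaR n R S = \<sigma>" by blast
  qed simp
  also have "\<dots> \<longleftrightarrow> (\<forall>i\<in>{1..n}. (THE j. j\<in>{1..n} \<and> card {k\<in>{1..n}. read_before R S k j} = i - 1) = \<sigma> i)"
    by (simp add: sigmaR_def)
  also have "\<dots> \<longleftrightarrow> (\<forall>i. 1 \<le> i \<and> i < n \<longrightarrow> read_before R S (\<sigma> i) (\<sigma> (Suc i)))"
  proof (rule rank_perm[OF _ _ _ perm])
    show "\<And>a. \<not> read_before R S a a" by (rule rb_irrefl)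
    show "\<And>a b c. read_before R S a b \<Longrightarrow> read_before R S b c \<Longrightarrow> read_before R S a c"
      by (rule rb_trans)
    show "\<And>a b. a \<in> {1..n} \<Longrightarrow> b \<in> {1..n} \<Longrightarrow> a \<noteq> b \<Longrightarrow> read_before R S a b \<or> read_before R S b a"
      using rb_total tuples_len[OF S] by metis
  qed
  finally show ?thesis .
qed

lemma Des_iff: "i \<in> DesRS n R S \<sigma> \<longleftrightarrow> i \<in> {1..n-1} \<and> read_before R S (\<sigma> (Suc i)) (\<sigma> i)"
  unfolding DesRS_def read_before_def by (auto simp: simR_sym)

lemma rb_cons:
  assumes Z: "Z \<in> tuples n (Suc r')" and a: "a \<in> {1..n}" and b: "b \<in> {1..n}"
  shows "read_before R Z a b \<longleftrightarrow> hd (Z a) < hd (Z b) \<or>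
     (hd (Z a) = hd (Z b) \<and> read_before R (\<lambda>j. tl (Z j)) a b)"
proof -
  have "Z a = hd (Z a) # tl (Z a)" using tuples_len[OF Z a] by (cases "Z a") auto
  moreover have "Z b = hd (Z b) # tl (Z b)" using tuples_len[OF Z b] by (cases "Z b") auto
  ultimately show ?thesis unfolding read_before_tb
    by (metis lexless_Cons list.inject)
qed

lemma tl_tuples: "Z \<in> tuples n (Suc r') \<Longrightarrow> (\<lambda>j. tl (Z j)) \<in> tuples n r'"
  unfolding tuples_def by auto

lemma chain_iff:
  assumes Z: "Z \<in> tuples n (Suc r')" and perm: "\<sigma> permutes {1..n}"
  shows "sigmaR n R Z = \<sigma> \<longleftrightarrow> (\<forall>i. 1 \<le> i \<and> i < n \<longrightarrow> hd (Z (\<sigma> i)) \<le> hd (Z (\<sigma> (Suc i))) \<and>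
      (i \<in> DesRS n R (\<lambda>j. tl (Z j)) \<sigma> \<longrightarrow> hd (Z (\<sigma> i)) < hd (Z (\<sigma> (Suc i)))))"
proof -
  let ?S = "\<lambda>j. tl (Z j)"
  have S: "?S \<in> tuples n r'" by (rule tl_tuples[OF Z])
  have sig_in: "\<sigma> i \<in> {1..n}" if "i \<in> {1..n}" for i using permutes_in_image[OF perm] that by blast
  have sig_inj: "\<sigma> i = \<sigma> j \<longleftrightarrow> i = j" for i j using perm by (metis permutes_inj injD)
  have step: "read_before R Z (\<sigma> i) (\<sigma> (Suc i)) \<longleftrightarrow> hd (Z (\<sigma> i)) \<le> hd (Z (\<sigma> (Suc i))) \<and>
      (i \<in> DesRS n R ?S \<sigma> \<longrightarrow> hd (Z (\<sigma> i)) < hd (Z (\<sigma> (Suc i))))" if i: "1 \<le> i" "i < n" for i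
  proof -
    have a: "\<sigma> i \<in> {1..n}" "\<sigma> (Suc i) \<in> {1..n}" using sig_in i by auto
    have ne: "\<sigma> (Suc i) \<noteq> \<sigma> i" using sig_inj by simp
    have D: "i \<in> DesRS n R ?S \<sigma> \<longleftrightarrow> \<not> read_before R ?S (\<sigma> i) (\<sigma> (Suc i))"
    proof -
      have "i \<in> DesRS n R ?S \<sigma> \<longleftrightarrow> read_before R ?S (\<sigma> (Suc i)) (\<sigma> i)"
        using Des_iff[of i n R ?S \<sigma>] i by auto
      also have "\<dots> \<longleftrightarrow> \<not> read_before R ?S (\<sigma> i) (\<sigma> (Suc i))"
        using rb_total[OF ne, of ?S R] tuples_len[OF S a(1)] tuples_len[OF S a(2)]
          rb_irrefl[of R ?S "\<sigma> i"] rb_trans[of R ?S "\<sigma> i" "\<sigma> (Suc i)" "\<sigma> i"] by auto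
      finally show ?thesis .
    qed
    show ?thesis using rb_cons[OF Z a, of R] D by auto
  qed
  show ?thesis using sigmaR_eq_iff[OF Z perm, of R] step by auto
qed



lemma geom_has_sum:
  fixes x :: real assumes "\<bar>x\<bar> < 1"
  shows "((\<lambda>m. x ^ m) has_sum (1 / (1 - x))) UNIV"
proof (rule norm_summable_imp_has_sum)
  show "summable (\<lambda>m. norm (x ^ m))"
    using summable_geometric[of "\<bar>x\<bar>"] assms by (simp add: power_abs)
  show "(\<lambda>m. x ^ m) sums (1 / (1 - x))" using geometric_sums[of x] assms by simp
qed

lemma geom_abs_summable:
  fixes x :: real assumes "\<bar>x\<bar> < 1"
  shows "(\<lambda>m. norm (x ^ m)) summable_on UNIV"
proof -
  have "((\<lambda>m. \<bar>x\<bar> ^ m) has_sum (1 / (1 - \<bar>x\<bar>))) UNIV" using geom_has_sum[of "\<bar>x\<bar>"] assms by simp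
  then show ?thesis by (simp add: power_abs has_sum_imp_summable)
qed

lemma prod_geom:
  fixes a :: "'i \<Rightarrow> real"
  assumes fin: "finite I" and a: "\<And>i. i \<in> I \<Longrightarrow> \<bar>a i\<bar> < 1"
  shows "((\<lambda>g. \<Prod>i\<in>I. a i ^ g i) has_sum (\<Prod>i\<in>I. 1 / (1 - a i))) (PiE I (\<lambda>_. UNIV))"
    and "(\<lambda>g. norm (\<Prod>i\<in>I. a i ^ g i)) summable_on (PiE I (\<lambda>_. UNIV))"
proof -
  have absa: "\<bar>\<bar>a i\<bar>\<bar> < 1" if "i \<in> I" for i using a[OF that] by simp
  have i1: "infsum (\<lambda>g. \<Prod>i\<in>I. \<bar>a i\<bar> ^ g i) (PiE I (\<lambda>_. UNIV)) = (\<Prod>i\<in>I. infsum (\<lambda>m. \<bar>a i\<bar> ^ m) UNIV)"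
    by (rule infsum_prod_PiE_abs[OF fin]) (use geom_abs_summable absa in blast)
  also have "\<dots> = (\<Prod>i\<in>I. 1 / (1 - \<bar>a i\<bar>))"
    by (rule prod.cong) (use geom_has_sum absa infsumI in blast)+
  finally have i2: "infsum (\<lambda>g. \<Prod>i\<in>I. \<bar>a i\<bar> ^ g i) (PiE I (\<lambda>_. UNIV)) = (\<Prod>i\<in>I. 1 / (1 - \<bar>a i\<bar>))" .
  have "(\<Prod>i\<in>I. 1 / (1 - \<bar>a i\<bar>)) > 0" by (rule prod_pos) (use a in \<open>auto\<close>)
  then have sm: "(\<lambda>g. \<Prod>i\<in>I. \<bar>a i\<bar> ^ g i) summable_on (PiE I (\<lambda>_. UNIV))"
    using i2 infsum_not_exists by fastforce
  have nrm: "norm (\<Prod>i\<in>I. a i ^ g i) = (\<Prod>i\<in>I. \<bar>a i\<bar> ^ g i)" for g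
    by (simp add: abs_prod power_abs)
  show sm2: "(\<lambda>g. norm (\<Prod>i\<in>I. a i ^ g i)) summable_on (PiE I (\<lambda>_. UNIV))"
    using sm by (simp only: nrm)
  have "(\<lambda>g. \<Prod>i\<in>I. a i ^ g i) summable_on (PiE I (\<lambda>_. UNIV))"
    by (rule abs_summable_summable[OF sm2])
  moreover have "infsum (\<lambda>g. \<Prod>i\<in>I. a i ^ g i) (PiE I (\<lambda>_. UNIV)) = (\<Prod>i\<in>I. infsum (\<lambda>m. a i ^ m) UNIV)"
    by (rule infsum_prod_PiE_abs[OF fin]) (use geom_abs_summable a in blast)
  moreover have "\<dots> = (\<Prod>i\<in>I. 1 / (1 - a i))"
    by (rule prod.cong) (use geom_has_sum a infsumI in blast)+
  ultimately show "((\<lambda>g. \<Prod>i\<in>I. a i ^ g i) has_sum (\<Prod>i\<in>I. 1 / (1 - a i))) (PiE I (\<lambda>_. UNIV))"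
    by (metis has_sum_infsum)
qed

lemma has_sum_product_abs:
  fixes f :: "'a \<Rightarrow> real" and g :: "'b \<Rightarrow> real"
  assumes nf: "(\<lambda>x. norm (f x)) summable_on A" and ng: "(\<lambda>y. norm (g y)) summable_on B"
    and fa: "(f has_sum a) A" and gb: "(g has_sum b) B"
  shows "((\<lambda>(x,y). f x * g y) has_sum (a * b)) (A \<times> B)"
proof -
  define sf where "sf = infsum (\<lambda>x. norm (f x)) A"
  define sg where "sg = infsum (\<lambda>y. norm (g y)) B"
  have bf: "(\<Sum>x\<in>F. norm (f x)) \<le> sf" if "finite F" "F \<subseteq> A" for F
    unfolding sf_def using that nf by (intro finite_sum_le_has_sum[OF has_sum_infsum]) auto
  have bg: "(\<Sum>y\<in>F. norm (g y)) \<le> sg" if "finite F" "F \<subseteq> B" for F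
    unfolding sg_def using that ng by (intro finite_sum_le_has_sum[OF has_sum_infsum]) auto
  have "(\<lambda>p. norm ((\<lambda>(x,y). f x * g y) p)) summable_on (A \<times> B)"
  proof (rule nonneg_bdd_above_summable_on)
    show "bdd_above (sum (\<lambda>p. norm ((\<lambda>(x,y). f x * g y) p)) ` {F. F \<subseteq> A \<times> B \<and> finite F})"
    proof (rule bdd_aboveI2)
      fix F assume F: "F \<in> {F. F \<subseteq> A \<times> B \<and> finite F}"
      have sub: "F \<subseteq> fst ` F \<times> snd ` F"
      proof
        fix p assume "p \<in> F"
        then show "p \<in> fst ` F \<times> snd ` F" by (cases p) (simp add: rev_image_eqI)
      qed
      have "(\<Sum>p\<in>F. norm ((\<lambda>(x,y). f x * g y) p)) \<le> (\<Sum>p\<in>fst ` F \<times> snd ` F. norm ((\<lambda>(x,y). f x * g y) p))"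
        using F sub by (intro sum_mono2) auto
      also have "\<dots> = (\<Sum>x\<in>fst ` F. norm (f x)) * (\<Sum>y\<in>snd ` F. norm (g y))"
        unfolding sum_product sum.cartesian_product by (rule sum.cong) (auto simp: abs_mult)
      also have "\<dots> \<le> sf * sg"
      proof -
        have fin: "finite (fst ` F)" "finite (snd ` F)" "fst ` F \<subseteq> A" "snd ` F \<subseteq> B" using F by auto
        have "0 \<le> (\<Sum>y\<in>snd ` F. norm (g y))" by (rule sum_nonneg) simp
        moreover have "0 \<le> sf" using bf[of "{}"] by simp
        ultimately show ?thesis using bf[OF fin(1,3)] bg[OF fin(2,4)] by (intro mult_mono) simp_all
      qed
      finally show "(\<Sum>p\<in>F. norm ((\<lambda>(x,y). f x * g y) p)) \<le> sf * sg" .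
    qed
  qed auto
  then have sm: "(\<lambda>(x,y). f x * g y) summable_on (A \<times> B)"
    by (rule abs_summable_summable)
  show ?thesis
  proof (rule has_sum_SigmaI[where g = "\<lambda>x. f x * b"])
    show "((\<lambda>y. (\<lambda>(x,y). f x * g y) (x, y)) has_sum f x * b) B" if "x \<in> A" for x
      using has_sum_cmult_right[OF gb, of "f x"] by simp
    show "((\<lambda>x. f x * b) has_sum a * b) A" using has_sum_cmult_left[OF fa] by simp
    show "(\<lambda>(x,y). f x * g y) summable_on A \<times> B" by (rule sm)
  qed
qed



lemma qmon_cons:
  assumes "\<And>j. j \<in> {1..n} \<Longrightarrow> Z j = h j # S j"
  shows "qmon n (Suc r') q Z = q (Suc r') ^ (\<Sum>j\<in>{1..n}. h j) * qmon n r' q S"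
proof -
  have split: "{1..Suc r'} = insert 1 {Suc 1..Suc r'}" by auto
  have "qmon n (Suc r') q Z = q (Suc r') ^ (\<Sum>j\<in>{1..n}. Z j ! 0) *
      (\<Prod>i\<in>{Suc 1..Suc r'}. q (Suc r' - i + 1) ^ (\<Sum>j\<in>{1..n}. Z j ! (i - 1)))"
    unfolding qmon_def split by (subst prod.insert) auto
  also have "(\<Prod>i\<in>{Suc 1..Suc r'}. q (Suc r' - i + 1) ^ (\<Sum>j\<in>{1..n}. Z j ! (i - 1)))
      = (\<Prod>i\<in>{1..r'}. q (Suc r' - Suc i + 1) ^ (\<Sum>j\<in>{1..n}. Z j ! (Suc i - 1)))"
    by (rule prod.shift_bounds_cl_Suc_ivl)
  also have "\<dots> = qmon n r' q S"
    unfolding qmon_def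
  proof (rule prod.cong[OF refl])
    fix i assume i: "i \<in> {1..r'}"
    have "(\<Sum>j\<in>{1..n}. Z j ! (Suc i - 1)) = (\<Sum>j\<in>{1..n}. S j ! (i - 1))"
      using assms i by (intro sum.cong) (auto simp: nth_Cons')
    then show "q (Suc r' - Suc i + 1) ^ (\<Sum>j\<in>{1..n}. Z j ! (Suc i - 1)) = q (r' - i + 1) ^ (\<Sum>j\<in>{1..n}. S j ! (i - 1))"
      by simp
  qed
  also have "(\<Sum>j\<in>{1..n}. Z j ! 0) = (\<Sum>j\<in>{1..n}. h j)"
    using assms by (intro sum.cong) auto
  finally show ?thesis .
qed

lemma qmon_prod:
  "qmon n r' q S = (\<Prod>p\<in>{1..n} \<times> {1..r'}. q (r' - snd p + 1) ^ (S (fst p) ! (snd p - 1)))"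
proof -
  have "qmon n r' q S = (\<Prod>i\<in>{1..r'}. \<Prod>j\<in>{1..n}. q (r' - i + 1) ^ (S j ! (i - 1)))"
    unfolding qmon_def by (simp add: power_sum)
  also have "\<dots> = (\<Prod>j\<in>{1..n}. \<Prod>i\<in>{1..r'}. q (r' - i + 1) ^ (S j ! (i - 1)))"
    by (rule prod.swap)
  also have "\<dots> = (\<Prod>p\<in>{1..n} \<times> {1..r'}. q (r' - snd p + 1) ^ (S (fst p) ! (snd p - 1)))"
    by (simp add: prod.cartesian_product case_prod_beta)
  finally show ?thesis .
qed

lemma sum_sum_ivl: fixes m :: nat and d :: "nat \<Rightarrow> nat" shows "(\<Sum>i\<in>{1..m}. \<Sum>k\<in>{1..i}. d k) = (\<Sum>k\<in>{1..m}. (m - k + 1) * d k)"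
proof (induction m)
  case 0 then show ?case by simp
next
  case (Suc m)
  have "(\<Sum>k\<in>{1..Suc m}. (Suc m - k + 1) * d k) = (\<Sum>k\<in>{1..m}. (Suc m - k + 1) * d k) + d (Suc m)"
    by simp
  also have "(\<Sum>k\<in>{1..m}. (Suc m - k + 1) * d k) = (\<Sum>k\<in>{1..m}. (m - k + 1) * d k + d k)"
    by (rule sum.cong) (auto simp: Suc_diff_le)
  also have "\<dots> = (\<Sum>k\<in>{1..m}. (m - k + 1) * d k) + (\<Sum>k\<in>{1..m}. d k)"
    by (simp add: sum.distrib)
  finally show ?case using Suc by simp
qed

lemma sum_card_less:
  assumes D: "D \<subseteq> {..<m}"
  shows "(\<Sum>i\<in>{1..m}. card {k\<in>D. k < i}) = (\<Sum>k\<in>D. m - k)"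
proof -
  have finD: "finite D" using D finite_subset by blast
  have "(\<Sum>i\<in>{1..m}. card {k\<in>D. k < i}) = (\<Sum>i\<in>{1..m}. \<Sum>k\<in>D. if k < i then 1 else 0)"
  proof (rule sum.cong[OF refl])
    fix i :: nat
    have "{k\<in>D. k < i} = D \<inter> {k. k < i}" by blast
    then show "card {k\<in>D. k < i} = (\<Sum>k\<in>D. if k < i then 1 else 0)" by (simp add: sum.If_cases finD)
  qed
  also have "\<dots> = (\<Sum>k\<in>D. \<Sum>i\<in>{1..m}. if k < i then 1 else 0)"
    by (rule sum.swap)
  also have "\<dots> = (\<Sum>k\<in>D. m - k)"
  proof (rule sum.cong[OF refl])
    fix k assume k: "k \<in> D"
    have e: "{Suc 0..m} \<inter> Collect ((<) k) = {Suc k..m}" by auto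
    have "(\<Sum>i\<in>{1..m}. if k < i then 1 else 0) = card {Suc k..m}"
      by (simp add: sum.If_cases e)
    then show "(\<Sum>i\<in>{1..m}. if k < i then 1 else (0::nat)) = m - k" by simp
  qed
  finally show ?thesis .
qed

definition vpos :: "nat \<Rightarrow> nat set \<Rightarrow> (nat \<Rightarrow> nat) \<Rightarrow> (nat \<Rightarrow> nat list) \<Rightarrow> (nat \<Rightarrow> nat) \<Rightarrow> nat \<Rightarrow> nat" where
  "vpos n R \<sigma> S d i = (\<Sum>k\<in>{1..i}. d k) + card {k \<in> DesRS n R S \<sigma>. k < i}"

definition Phi :: "nat \<Rightarrow> nat set \<Rightarrow> (nat \<Rightarrow> nat) \<Rightarrow> (nat \<Rightarrow> nat list) \<Rightarrow> (nat \<Rightarrow> nat) \<Rightarrow> nat \<Rightarrow> nat list" where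
  "Phi n R \<sigma> S d = (\<lambda>j. if j \<in> {1..n} then vpos n R \<sigma> S d (inv \<sigma> j) # S j else [])"

lemma Des_sub: "DesRS n R S \<sigma> \<subseteq> {1..n-1}" unfolding DesRS_def by auto

lemma vpos_1: "vpos n R \<sigma> S d 1 = d 1"
proof -
  have "{k \<in> DesRS n R S \<sigma>. k < 1} = {}" using Des_sub[of n R S \<sigma>] by auto
  then show ?thesis unfolding vpos_def by simp
qed

lemma vpos_Suc: "vpos n R \<sigma> S d (Suc i) = vpos n R \<sigma> S d i + d (Suc i) + (if i \<in> DesRS n R S \<sigma> then 1 else 0)"
proof -
  let ?D = "DesRS n R S \<sigma>"
  have fin: "finite ?D" using Des_sub[of n R S \<sigma>] finite_subset by blast
  have "{k \<in> ?D. k < Suc i} = {k \<in> ?D. k < i} \<union> (if i \<in> ?D then {i} else {})" by (auto simp: less_Suc_eq)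
  moreover have "card ({k \<in> ?D. k < i} \<union> (if i \<in> ?D then {i} else {})) = card {k \<in> ?D. k < i} + (if i \<in> ?D then 1 else 0)"
    using fin by (auto simp: card_insert_if)
  ultimately show ?thesis unfolding vpos_def by simp
qed

lemma ZR_Phi:
  assumes perm: "\<sigma> permutes {1..n}"
  shows "ZRsigma n R \<sigma> S = Phi n R \<sigma> S (\<lambda>_. 0)"
proof
  fix j
  show "ZRsigma n R \<sigma> S j = Phi n R \<sigma> S (\<lambda>_. 0) j"
  proof (cases "j \<in> {1..n}")
    case True
    have th: "(THE i. i \<in> {1..n} \<and> \<sigma> i = j) = inv \<sigma> j"
    proof (rule the_equality)
      show "inv \<sigma> j \<in> {1..n} \<and> \<sigma> (inv \<sigma> j) = j"
        using True permutes_inverses[OF perm] permutes_in_image[OF permutes_inv[OF perm]] by auto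
      show "i = inv \<sigma> j" if "i \<in> {1..n} \<and> \<sigma> i = j" for i
        using that permutes_inverses[OF perm] by auto
    qed
    have "ZRsigma n R \<sigma> S j = card {k \<in> DesRS n R S \<sigma>. k < inv \<sigma> j} # S j"
      unfolding ZRsigma_def th by (rule if_P[OF True])
    moreover have "Phi n R \<sigma> S (\<lambda>_. 0) j = vpos n R \<sigma> S (\<lambda>_. 0) (inv \<sigma> j) # S j"
      unfolding Phi_def by (rule if_P[OF True])
    ultimately show ?thesis unfolding vpos_def by simp
  next
    case False
    have "ZRsigma n R \<sigma> S j = []" unfolding ZRsigma_def by (rule if_not_P[OF False])
    moreover have "Phi n R \<sigma> S (\<lambda>_. 0) j = []" unfolding Phi_def by (rule if_not_P[OF False])
    ultimately show ?thesis by simp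
  qed
qed

lemma weight:
  assumes perm: "\<sigma> permutes {1..n}"
  shows "qmon n (Suc r') q (Phi n R \<sigma> S d) =
     q (Suc r') ^ (ComajRS n R S \<sigma> + (\<Sum>k\<in>{1..n}. (n - k + 1) * d k)) * qmon n r' q S"
proof -
  have "qmon n (Suc r') q (Phi n R \<sigma> S d) = q (Suc r') ^ (\<Sum>j\<in>{1..n}. vpos n R \<sigma> S d (inv \<sigma> j)) * qmon n r' q S"
    by (rule qmon_cons) (simp add: Phi_def)
  also have "(\<Sum>j\<in>{1..n}. vpos n R \<sigma> S d (inv \<sigma> j)) = (\<Sum>i\<in>{1..n}. vpos n R \<sigma> S d i)"
    using sum.reindex_bij_betw[OF permutes_imp_bij[OF permutes_inv[OF perm]], of "vpos n R \<sigma> S d"] .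
  also have "\<dots> = (\<Sum>i\<in>{1..n}. \<Sum>k\<in>{1..i}. d k) + (\<Sum>i\<in>{1..n}. card {k \<in> DesRS n R S \<sigma>. k < i})"
    unfolding vpos_def by (simp add: sum.distrib)
  also have "\<dots> = (\<Sum>k\<in>{1..n}. (n - k + 1) * d k) + ComajRS n R S \<sigma>"
  proof -
    have Dn: "DesRS n R S \<sigma> \<subseteq> {..<n}" unfolding DesRS_def by auto
    show ?thesis unfolding sum_sum_ivl ComajRS_def sum_card_less[OF Dn] by simp
  qed
  finally show ?thesis by (simp add: add.commute)
qed



definition Psi :: "nat \<Rightarrow> nat set \<Rightarrow> (nat \<Rightarrow> nat) \<Rightarrow> (nat \<Rightarrow> nat list) \<Rightarrow> (nat \<Rightarrow> nat list) \<times> (nat \<Rightarrow> nat)" where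
  "Psi n R \<sigma> Z = ((\<lambda>j. tl (Z j)), restrict (\<lambda>i. hd (Z (\<sigma> i)) - (if i = 1 then 0 else
      hd (Z (\<sigma> (i - 1))) + (if i - 1 \<in> DesRS n R (\<lambda>j. tl (Z j)) \<sigma> then 1 else 0))) {1..n})"

context
  fixes n :: nat and R :: "nat set" and \<sigma> :: "nat \<Rightarrow> nat"
  assumes perm: "\<sigma> permutes {1..n}"
begin

lemma sig_in: "i \<in> {1..n} \<Longrightarrow> \<sigma> i \<in> {1..n}" using permutes_in_image[OF perm] by blast
lemma isig_in: "j \<in> {1..n} \<Longrightarrow> inv \<sigma> j \<in> {1..n}" using permutes_in_image[OF permutes_inv[OF perm]] by blast

lemma Phi_tuples: "S \<in> tuples n r' \<Longrightarrow> Phi n R \<sigma> S d \<in> tuples n (Suc r')"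
  unfolding tuples_def Phi_def by auto

lemma Phi_tl: "S \<in> tuples n r' \<Longrightarrow> (\<lambda>j. tl (Phi n R \<sigma> S d j)) = S"
  unfolding Phi_def by (auto simp: tuples_out)

lemma Phi_hd: "i \<in> {1..n} \<Longrightarrow> hd (Phi n R \<sigma> S d (\<sigma> i)) = vpos n R \<sigma> S d i"
  unfolding Phi_def using sig_in permutes_inverses(2)[OF perm] by auto

lemma Phi_in_A:
  assumes S: "S \<in> tuples n r'"
  shows "sigmaR n R (Phi n R \<sigma> S d) = \<sigma>"
proof -
  have Z: "Phi n R \<sigma> S d \<in> tuples n (Suc r')" by (rule Phi_tuples[OF S])
  show ?thesis unfolding chain_iff[OF Z perm] Phi_tl[OF S]
  proof (intro allI impI)
    fix i assume i: "1 \<le> i \<and> i < n"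
    then have a: "i \<in> {1..n}" "Suc i \<in> {1..n}" by auto
    show "hd (Phi n R \<sigma> S d (\<sigma> i)) \<le> hd (Phi n R \<sigma> S d (\<sigma> (Suc i))) \<and>
       (i \<in> DesRS n R S \<sigma> \<longrightarrow> hd (Phi n R \<sigma> S d (\<sigma> i)) < hd (Phi n R \<sigma> S d (\<sigma> (Suc i))))"
      unfolding Phi_hd[OF a(1)] Phi_hd[OF a(2)] vpos_Suc by auto
  qed
qed

lemma Psi_Phi:
  assumes S: "S \<in> tuples n r'" and d: "d \<in> PiE {1..n} (\<lambda>_. UNIV)"
  shows "Psi n R \<sigma> (Phi n R \<sigma> S d) = (S, d)"
proof -
  have "restrict (\<lambda>i. hd (Phi n R \<sigma> S d (\<sigma> i)) - (if i = 1 then 0 else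
      hd (Phi n R \<sigma> S d (\<sigma> (i - 1))) + (if i - 1 \<in> DesRS n R S \<sigma> then 1 else 0))) {1..n} = d"
  proof
    fix i show "restrict (\<lambda>i. hd (Phi n R \<sigma> S d (\<sigma> i)) - (if i = 1 then 0 else
      hd (Phi n R \<sigma> S d (\<sigma> (i - 1))) + (if i - 1 \<in> DesRS n R S \<sigma> then 1 else 0))) {1..n} i = d i"
    proof (cases "i \<in> {1..n}")
      case True
      show ?thesis
      proof (cases "i = 1")
        case True
        then show ?thesis using Phi_hd[of 1 S d] \<open>i \<in> {1..n}\<close> vpos_1[of n R \<sigma> S d] by simp
      next
        case False
        then obtain i' where i': "i = Suc i'" "i' \<in> {1..n}" using \<open>i \<in> {1..n}\<close> by (cases i) auto
        then show ?thesis using Phi_hd[of i S d] Phi_hd[of i' S d] \<open>i \<in> {1..n}\<close> False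
          by (simp add: vpos_Suc)
      qed
    next
      case False then show ?thesis unfolding restrict_def if_not_P[OF False] using PiE_arb[OF d False] by simp
    qed
  qed
  then show ?thesis unfolding Psi_def Phi_tl[OF S] by simp
qed

lemma Phi_Psi:
  assumes Z: "Z \<in> tuples n (Suc r')" and A: "sigmaR n R Z = \<sigma>"
  shows "Phi n R \<sigma> (fst (Psi n R \<sigma> Z)) (snd (Psi n R \<sigma> Z)) = Z"
proof -
  define S where "S = (\<lambda>j. tl (Z j))"
  define d where "d = snd (Psi n R \<sigma> Z)"
  have fstP: "fst (Psi n R \<sigma> Z) = S" unfolding Psi_def S_def by simp
  have dI: "d i = hd (Z (\<sigma> i)) - (if i = 1 then 0 else
      hd (Z (\<sigma> (i - 1))) + (if i - 1 \<in> DesRS n R S \<sigma> then 1 else 0))" if "i \<in> {1..n}" for i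
    unfolding d_def Psi_def S_def using that by simp
  have ch: "\<forall>i. 1 \<le> i \<and> i < n \<longrightarrow> hd (Z (\<sigma> i)) \<le> hd (Z (\<sigma> (Suc i))) \<and>
      (i \<in> DesRS n R S \<sigma> \<longrightarrow> hd (Z (\<sigma> i)) < hd (Z (\<sigma> (Suc i))))"
    using chain_iff[OF Z perm, of R] A unfolding S_def by simp
  have v: "vpos n R \<sigma> S d i = hd (Z (\<sigma> i))" if "1 \<le> i" "i \<le> n" for i
    using that
  proof (induction i)
    case 0 then show ?case by simp
  next
    case (Suc i)
    show ?case
    proof (cases "i = 0")
      case True then show ?thesis using dI[of 1] Suc.prems vpos_1[of n R \<sigma> S d] by simp
    next
      case False
      then have IH: "vpos n R \<sigma> S d i = hd (Z (\<sigma> i))" using Suc.IH Suc.prems by simp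
      have c: "hd (Z (\<sigma> i)) + (if i \<in> DesRS n R S \<sigma> then 1 else 0) \<le> hd (Z (\<sigma> (Suc i)))"
        using ch Suc.prems False by (auto simp: Suc_le_eq)
      have "d (Suc i) = hd (Z (\<sigma> (Suc i))) - (hd (Z (\<sigma> i)) + (if i \<in> DesRS n R S \<sigma> then 1 else 0))"
        using dI[of "Suc i"] Suc.prems False by simp
      then show ?thesis unfolding vpos_Suc IH using c by simp
    qed
  qed
  show ?thesis unfolding fstP d_def[symmetric]
  proof
    fix j show "Phi n R \<sigma> S d j = Z j"
    proof (cases "j \<in> {1..n}")
      case True
      have ij: "inv \<sigma> j \<in> {1..n}" by (rule isig_in[OF True])
      have "vpos n R \<sigma> S d (inv \<sigma> j) = hd (Z j)"
        using v[of "inv \<sigma> j"] ij permutes_inverses(1)[OF perm] by auto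
      moreover have "Z j \<noteq> []" using tuples_len[OF Z True] by auto
      ultimately show ?thesis using True unfolding Phi_def S_def by simp
    next
      case False then show ?thesis unfolding Phi_def using tuples_out[OF Z False] by simp
    qed
  qed
qed

lemma Psi_in:
  assumes Z: "Z \<in> tuples n (Suc r')"
  shows "Psi n R \<sigma> Z \<in> tuples n r' \<times> PiE {1..n} (\<lambda>_. UNIV)"
  unfolding Psi_def using tl_tuples[OF Z] by simp

end



theorem corollary5:
  fixes n r :: nat and R :: "nat set" and \<sigma> :: "nat \<Rightarrow> nat" and q :: "nat \<Rightarrow> real"
  assumes "n \<ge> 1" and "r \<ge> 1" and "R \<subseteq> {1..n-1}" and "\<sigma> permutes {1..n}"
    and "\<forall>i\<in>{1..r}. \<bar>q i\<bar> < 1"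
  shows "\<exists>L. ((\<lambda>Z. qmon n r q Z) has_sum L) {Z \<in> tuples n r. sigmaR n R Z = \<sigma>}
    \<and> ((\<lambda>S. q r ^ ComajRS n R S \<sigma> * qmon n (r - 1) q S) has_sum (qpoch (q r) (q r) n * L))
         (tuples n (r - 1))
    \<and> ((\<lambda>S. qmon n r q (ZRsigma n R \<sigma> S)) has_sum (qpoch (q r) (q r) n * L))
         (tuples n (r - 1))"
proof -
  have perm: "\<sigma> permutes {1..n}" by fact
  obtain r' where r: "r = Suc r'" using \<open>r \<ge> 1\<close> by (cases r) auto
  have rm1: "r - 1 = r'" using r by simp
  define T where "T = tuples n r'"
  define D where "D = PiE {1..n} (\<lambda>_::nat. (UNIV::nat set))"
  define A where "A = {Z \<in> tuples n r. sigmaR n R Z = \<sigma>}"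
  define x where "x = q r"
  have x1: "\<bar>x\<bar> < 1" using assms(5) \<open>r \<ge> 1\<close> unfolding x_def by auto
  define c where "c S = x ^ ComajRS n R S \<sigma> * qmon n r' q S" for S
  define w where "w d = (\<Prod>k\<in>{1..n}. (x ^ (n - k + 1)) ^ d k)" for d :: "nat \<Rightarrow> nat"
  define G where "G = (\<Prod>k\<in>{1..n}. 1 / (1 - x ^ (n - k + 1)))"
  have xp: "\<bar>x ^ (n - k + 1)\<bar> < 1" for k
  proof -
    have "\<bar>x\<bar> ^ Suc (n - k) \<le> \<bar>x\<bar>" using x1 by (intro power_Suc_le_self) auto
    moreover have "\<bar>x ^ (n - k + 1)\<bar> = \<bar>x\<bar> ^ Suc (n - k)" by (simp add: power_abs abs_mult)
    ultimately show ?thesis using x1 by linarith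
  qed
  define I where "I = {1..n} \<times> {1..r'}"
  define a where "a p = q (r' - snd p + 1)" for p :: "nat \<times> nat"
  have aI: "\<bar>a p\<bar> < 1" if "p \<in> I" for p
  proof -
    have "r' - snd p + 1 \<in> {1..r}" using that r unfolding I_def by auto
    then show ?thesis using assms(5) unfolding a_def by blast
  qed
  have pg: "(\<lambda>g. norm (\<Prod>p\<in>I. a p ^ g p)) summable_on PiE I (\<lambda>_. UNIV)"
    by (rule prod_geom(2)) (use aI in \<open>auto simp: I_def\<close>)
  define \<beta> where "\<beta> S = restrict (\<lambda>p. S (fst p) ! (snd p - 1)) I" for S :: "nat \<Rightarrow> nat list"
  define \<beta>' where "\<beta>' g = (\<lambda>j. if j \<in> {1..n} then map (\<lambda>i. g (j, Suc i)) [0..<r'] else [])" for g :: "nat \<times> nat \<Rightarrow> nat"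
  have qmon_beta: "qmon n r' q S = (\<Prod>p\<in>I. a p ^ \<beta> S p)" for S
    unfolding qmon_prod I_def[symmetric] by (rule prod.cong) (auto simp: a_def \<beta>_def)
  have nq: "(\<lambda>S. norm (qmon n r' q S)) summable_on T"
  proof -
    have "(\<lambda>S. norm (qmon n r' q S)) summable_on T \<longleftrightarrow> (\<lambda>g. norm (\<Prod>p\<in>I. a p ^ g p)) summable_on PiE I (\<lambda>_. UNIV)"
    proof (rule summable_on_reindex_bij_witness[where i = \<beta>' and j = \<beta>])
      fix S assume S: "S \<in> T"
      show "\<beta>' (\<beta> S) = S"
      proof
        fix j show "\<beta>' (\<beta> S) j = S j"
        proof (cases "j \<in> {1..n}")
          case True
          have "map (\<lambda>i. \<beta> S (j, Suc i)) [0..<r'] = map (\<lambda>i. S j ! i) [0..<r']"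
            using True by (intro map_cong) (auto simp: \<beta>_def I_def)
          also have "\<dots> = S j" using tuples_len[of S n r' j] S True unfolding T_def
            by (metis map_nth)
          finally show ?thesis unfolding \<beta>'_def using True by simp
        next
          case False then show ?thesis unfolding \<beta>'_def if_not_P[OF False] using tuples_out[of S n r' j] S T_def by simp
        qed
      qed
      show "\<beta> S \<in> PiE I (\<lambda>_. UNIV)" unfolding \<beta>_def by simp
      show "norm (\<Prod>p\<in>I. a p ^ \<beta> S p) = norm (qmon n r' q S)" by (simp add: qmon_beta)
    next
      fix g :: "nat \<times> nat \<Rightarrow> nat" assume g: "g \<in> PiE I (\<lambda>_. UNIV)"
      show "\<beta> (\<beta>' g) = g"
      proof
        fix p show "\<beta> (\<beta>' g) p = g p"
        proof (cases "p \<in> I")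
          case True
          then obtain j i where p: "p = (j, i)" "j \<in> {1..n}" "i \<in> {1..r'}" unfolding I_def by auto
          then have "\<beta>' g j ! (i - 1) = g (j, i)" unfolding \<beta>'_def by auto
          then show ?thesis using True p unfolding \<beta>_def by simp
        next
          case False then show ?thesis unfolding \<beta>_def using PiE_arb[OF g False] by simp
        qed
      qed
      show "\<beta>' g \<in> T" unfolding T_def tuples_def \<beta>'_def by auto
    qed
    then show ?thesis using pg by simp
  qed
  have nc: "(\<lambda>S. norm (c S)) summable_on T"
  proof (rule Infinite_Sum.abs_summable_on_comparison_test'[OF nq])
    fix S
    have "\<bar>x\<bar> ^ ComajRS n R S \<sigma> \<le> 1" using x1 by (intro power_le_one) auto
    then have "\<bar>x\<bar> ^ ComajRS n R S \<sigma> * \<bar>qmon n r' q S\<bar> \<le> 1 * \<bar>qmon n r' q S\<bar>"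
      by (intro mult_right_mono) auto
    then show "norm (c S) \<le> norm (qmon n r' q S)" unfolding c_def by (simp add: abs_mult power_abs)
  qed
  define M where "M = infsum c T"
  have hc: "(c has_sum M) T" unfolding M_def by (rule has_sum_infsum[OF abs_summable_summable[OF nc]])
  have hw: "(w has_sum G) D" and nw: "(\<lambda>d. norm (w d)) summable_on D"
    unfolding w_def G_def D_def by (rule prod_geom; use xp in auto)+
  have hp: "((\<lambda>(S, d). c S * w d) has_sum (M * G)) (T \<times> D)"
    by (rule has_sum_product_abs[OF nc nw hc hw])
  have hA: "(qmon n r q has_sum (M * G)) A"
  proof -
    have "((\<lambda>(S, d). c S * w d) has_sum (M * G)) (T \<times> D) \<longleftrightarrow> (qmon n r q has_sum (M * G)) A"
    proof (rule has_sum_reindex_bij_witness[where i = "Psi n R \<sigma>" and j = "\<lambda>(S, d). Phi n R \<sigma> S d"])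
      fix p assume p: "p \<in> T \<times> D"
      obtain S d where Sd: "p = (S, d)" "S \<in> tuples n r'" "d \<in> PiE {1..n} (\<lambda>_. UNIV)"
        using p unfolding T_def D_def by auto
      show "Psi n R \<sigma> ((\<lambda>(S, d). Phi n R \<sigma> S d) p) = p"
        using Psi_Phi[OF perm Sd(2,3)] Sd(1) by simp
      show "(\<lambda>(S, d). Phi n R \<sigma> S d) p \<in> A"
        using Phi_tuples[OF perm Sd(2)] Phi_in_A[OF perm Sd(2)] Sd(1) r unfolding A_def by simp
      have "qmon n r q (Phi n R \<sigma> S d) = x ^ (ComajRS n R S \<sigma> + (\<Sum>k\<in>{1..n}. (n - k + 1) * d k)) * qmon n r' q S"
        unfolding x_def r by (rule weight[OF perm])
      also have "\<dots> = c S * w d"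
      proof -
        have wx: "w d = x ^ (\<Sum>k\<in>{1..n}. (n - k + 1) * d k)" unfolding w_def power_sum by (simp only: power_mult)
        show ?thesis unfolding c_def wx by (simp only: power_add mult_ac)
      qed
      finally show "qmon n r q ((\<lambda>(S, d). Phi n R \<sigma> S d) p) = (\<lambda>(S, d). c S * w d) p"
        using Sd(1) by simp
    next
      fix Z assume Z: "Z \<in> A"
      then have Z1: "Z \<in> tuples n (Suc r')" "sigmaR n R Z = \<sigma>" unfolding A_def r by auto
      show "(\<lambda>(S, d). Phi n R \<sigma> S d) (Psi n R \<sigma> Z) = Z"
        using Phi_Psi[OF perm Z1] by (simp add: split_beta)
      show "Psi n R \<sigma> Z \<in> T \<times> D"
        using Psi_in[OF perm Z1(1)] unfolding T_def D_def .
    qed simp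
    then show ?thesis using hp by simp
  qed
  have pq: "qpoch x x n * G = 1"
  proof -
    have ne: "1 - x ^ (n - k + 1) \<noteq> 0" for k using xp[of k] by auto
    have "qpoch x x n = (\<Prod>k\<in>{1..n}. 1 - x ^ (n - k + 1))"
      unfolding qpoch_def
    proof (rule prod.reindex_bij_witness[where i = "\<lambda>k. n - k" and j = "\<lambda>k. n - k"])
      fix k assume "k \<in> {..<n}"
      then show "n - (n - k) = k" "n - k \<in> {1..n}" "1 - x ^ (n - (n - k) + 1) = 1 - x * x ^ k" by auto
    next
      fix k assume "k \<in> {1..n}"
      then show "n - (n - k) = k" "n - k \<in> {..<n}" by auto
    qed
    then have "qpoch x x n * G = (\<Prod>k\<in>{1..n}. (1 - x ^ (n - k + 1)) * (1 / (1 - x ^ (n - k + 1))))"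
      unfolding G_def by (simp only: prod.distrib)
    also have "\<dots> = 1" using ne by simp
    finally show ?thesis .
  qed
  show ?thesis
  proof (intro exI conjI)
    show "(qmon n r q has_sum (M * G)) {Z \<in> tuples n r. sigmaR n R Z = \<sigma>}" using hA unfolding A_def .
    have e: "qpoch (q r) (q r) n * (M * G) = M" using pq unfolding x_def by (simp add: algebra_simps)
    show "((\<lambda>S. q r ^ ComajRS n R S \<sigma> * qmon n (r - 1) q S) has_sum (qpoch (q r) (q r) n * (M * G))) (tuples n (r - 1))"
      unfolding e rm1 using hc unfolding c_def x_def T_def .
    have "qmon n r q (ZRsigma n R \<sigma> S) = c S" for S
      unfolding ZR_Phi[OF perm] r using weight[OF perm, of r' q R S "\<lambda>_. 0"] unfolding c_def x_def r by simp
    then show "((\<lambda>S. qmon n r q (ZRsigma n R \<sigma> S)) has_sum (qpoch (q r) (q r) n * (M * G))) (tuples n (r - 1))"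
      unfolding e rm1 using hc unfolding T_def by simp
  qed
qed


end
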